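(* Let $mG$ be a finite $|N|$-player canonical misinformation game with $|S|$ pure strategy profiles (positions). Then the length $\mathfrak{L}_{\mathcal{AD}}(mG)$ of the Adaptation Procedure on $mG$ satisfies $\mathfrak{L}_{\mathcal{AD}}(mG)\le |S|$.
   Context: A normal-form game is $G=\langle N,S,P\rangle$ with finite players $N$, finite pure strategy sets $S_i$, positions $S=\times_i S_i$, payoffs $P_i:S\to\mathbb{R}$. A misinformation game $mG=\langle G^0,G^1,\dots,G^{|N|}\rangle$ consists of the actual game $G^0$ and subjective games $G^i$; it is canonical if all $G^i=\langle N,S,P^i\rangle$ differ from $G^0$ only in payoffs and in every $G^i$ all players have equally many pure strategies. $NME(mG)$ is the set of profiles $\sigma=(\sigma_1,\dots,\sigma_{|N|})$ such that each $\sigma_i$ is player $i$'s component of some Nash equilibrium of $G^i$. $\chi(\sigma)=\mathrm{supp}(\sigma_1)\times\dots\times\mathrm{supp}(\sigma_{|N|})$. For $\vec v\in S$, $mG_{\vec v}$ is obtained by replacing, in every $P^i$ ($i\ge1$), the payoff vector at position $\vec v$ by $P^0(\vec v)$. For a set $M$ of misinformation games, $\mathcal{AD}(M)=\{mG_{\vec u}: mG\in M,\sigma\in NME(mG),\vec u\in\chi(\sigma)\}$, $\mathcal{AD}^{(0)}(M)=M$, $\mathcal{AD}^{(t+1)}(M)=\mathcal{AD}^{(t)}(\mathcal{AD}(M))$. The length $\mathfrak{L}_{\mathcal{AD}}(mG)$ of the Adaptation Procedure on $mG$ is the least $t\ge0$ with $\mathcal{AD}^{(t+1)}(\{mG\})=\mathcal{AD}^{(t)}(\{mG\})$.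 *)

theory Defs
  imports Complex_Main
begin

text \<open>Players are 0,...,n-1; player i has pure strategies 0,...,k i - 1.
  A position is an extensional function s with s i < k i for i < n and s i = 0 otherwise.
  A canonical misinformation game (all component games share N and S) is represented by
  its family of payoff functions  mg j s p  (game j, position s, player p), where game 0 is
  the actual game and game Suc i is the subjective game of player i (i < n).\<close>

type_synonym payoff = "(nat \<Rightarrow> nat) \<Rightarrow> nat \<Rightarrow> real"
type_synonym mgame = "nat \<Rightarrow> payoff"

definition positions :: "nat \<Rightarrow> (nat \<Rightarrow> nat) \<Rightarrow> (nat \<Rightarrow> nat) set" where
  "positions n k = {s. (\<forall>i<n. s i < k i) \<and> (\<forall>i. n \<le> i \<longrightarrow> s i = 0)}"

definition mixed :: "(nat \<Rightarrow> nat) \<Rightarrow> nat \<Rightarrow> (nat \<Rightarrow> real) \<Rightarrow> bool" where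
  "mixed k i \<tau> \<longleftrightarrow> (\<forall>a. 0 \<le> \<tau> a) \<and> (\<forall>a. k i \<le> a \<longrightarrow> \<tau> a = 0) \<and> (\<Sum>a<k i. \<tau> a) = 1"

definition profile :: "nat \<Rightarrow> (nat \<Rightarrow> nat) \<Rightarrow> (nat \<Rightarrow> nat \<Rightarrow> real) \<Rightarrow> bool" where
  "profile n k \<sigma> \<longleftrightarrow> (\<forall>i<n. mixed k i (\<sigma> i)) \<and> (\<forall>i. n \<le> i \<longrightarrow> \<sigma> i = (\<lambda>_. 0))"

definition EU :: "nat \<Rightarrow> (nat \<Rightarrow> nat) \<Rightarrow> payoff \<Rightarrow> (nat \<Rightarrow> nat \<Rightarrow> real) \<Rightarrow> nat \<Rightarrow> real" where
  "EU n k P \<sigma> i = (\<Sum>s\<in>positions n k. (\<Prod>j<n. \<sigma> j (s j)) * P s i)"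

definition nash :: "nat \<Rightarrow> (nat \<Rightarrow> nat) \<Rightarrow> payoff \<Rightarrow> (nat \<Rightarrow> nat \<Rightarrow> real) \<Rightarrow> bool" where
  "nash n k P \<sigma> \<longleftrightarrow> profile n k \<sigma> \<and>
     (\<forall>i<n. \<forall>\<tau>. mixed k i \<tau> \<longrightarrow> EU n k P (\<sigma>(i := \<tau>)) i \<le> EU n k P \<sigma> i)"

definition NME :: "nat \<Rightarrow> (nat \<Rightarrow> nat) \<Rightarrow> mgame \<Rightarrow> (nat \<Rightarrow> nat \<Rightarrow> real) set" where
  "NME n k mg = {\<sigma>. profile n k \<sigma> \<and> (\<forall>i<n. \<exists>\<tau>. nash n k (mg (Suc i)) \<tau> \<and> \<sigma> i = \<tau> i)}"

definition chi :: "nat \<Rightarrow> (nat \<Rightarrow> nat) \<Rightarrow> (nat \<Rightarrow> nat \<Rightarrow> real) \<Rightarrow> (nat \<Rightarrow> nat) set" where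
  "chi n k \<sigma> = {s \<in> positions n k. \<forall>i<n. \<sigma> i (s i) \<noteq> 0}"

definition upd :: "nat \<Rightarrow> mgame \<Rightarrow> (nat \<Rightarrow> nat) \<Rightarrow> mgame" where
  "upd n mg v = (\<lambda>j s p. if 1 \<le> j \<and> j \<le> n \<and> s = v \<and> p < n then mg 0 v p else mg j s p)"

definition AD :: "nat \<Rightarrow> (nat \<Rightarrow> nat) \<Rightarrow> mgame set \<Rightarrow> mgame set" where
  "AD n k M = {upd n mg u | mg \<sigma> u. mg \<in> M \<and> \<sigma> \<in> NME n k mg \<and> u \<in> chi n k \<sigma>}"

fun ADiter :: "nat \<Rightarrow> (nat \<Rightarrow> nat) \<Rightarrow> nat \<Rightarrow> mgame set \<Rightarrow> mgame set" where
  "ADiter n k 0 M = M"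
| "ADiter n k (Suc t) M = ADiter n k t (AD n k M)"

definition ad_length :: "nat \<Rightarrow> (nat \<Rightarrow> nat) \<Rightarrow> mgame \<Rightarrow> nat" where
  "ad_length n k mg = (LEAST t. ADiter n k (Suc t) {mg} = ADiter n k t {mg})"

end

theory Submission
  imports Defs "HOL-Analysis.Analysis"
begin

lemma tendsto_fun_iff:
  fixes X :: "nat \<Rightarrow> nat \<Rightarrow> real"
  shows "(X \<longlonglongrightarrow> L) \<longleftrightarrow> (\<forall>i. (\<lambda>m. X m i) \<longlonglongrightarrow> L i)"
proof -
  have "(X \<longlonglongrightarrow> L) \<longleftrightarrow> limitin (product_topology (\<lambda>i. euclidean) UNIV) X L sequentially"
    by (simp add: euclidean_product_topology)
  also have "\<dots> \<longleftrightarrow> (\<forall>i. (\<lambda>m. X m i) \<longlonglongrightarrow> L i)"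
    by (simp add: limitin_componentwise)
  finally show ?thesis .
qed

definition cube :: "nat \<Rightarrow> (nat \<Rightarrow> real) set" where
  "cube d = {x. \<forall>i. x i \<in> (if i < d then {0..1} else {0})}"

lemma cube_out: "x \<in> cube d \<Longrightarrow> \<not> i < d \<Longrightarrow> x i = 0"
proof -
  assume "x \<in> cube d" "\<not> i < d"
  then have "x i \<in> (if i < d then {0..1} else {0})" unfolding cube_def by blast
  with \<open>\<not> i < d\<close> show ?thesis by simp
qed

lemma cube_in: "x \<in> cube d \<Longrightarrow> i < d \<Longrightarrow> 0 \<le> x i \<and> x i \<le> 1"
proof -
  assume "x \<in> cube d" "i < d"
  then have "x i \<in> (if i < d then {0..1} else {0})" unfolding cube_def by blast
  with \<open>i < d\<close> show ?thesis by simp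
qed

lemma cubeI: "(\<And>i. i < d \<Longrightarrow> 0 \<le> x i \<and> x i \<le> 1) \<Longrightarrow> (\<And>i. \<not> i < d \<Longrightarrow> x i = 0) \<Longrightarrow> x \<in> cube d"
  by (auto simp: cube_def)

lemma compact_cube: "compact (cube d)"
proof -
  have eq: "cube d = PiE UNIV (\<lambda>i. if i < d then {0..1::real} else {0})"
    by (simp add: cube_def PiE_UNIV_domain Pi_def)
  have "compactin (product_topology (\<lambda>i. euclidean) UNIV) (PiE UNIV (\<lambda>i. if i < d then {0..1::real} else {0}))"
    by (subst compactin_PiE) auto
  then show ?thesis unfolding eq by (simp add: euclidean_product_topology)
qed

lemma approx_fix:
  fixes f :: "(nat \<Rightarrow> real) \<Rightarrow> (nat \<Rightarrow> real)"
  assumes fC: "\<forall>x\<in>cube d. f x \<in> cube d" and p: "0 < p"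
  shows "\<exists>z\<in>cube d. \<forall>i<d. \<exists>a\<in>cube d. \<exists>b\<in>cube d.
     (\<forall>j<d. \<bar>a j - z j\<bar> \<le> 1 / real p) \<and> (\<forall>j<d. \<bar>b j - z j\<bar> \<le> 1 / real p) \<and>
     a i \<le> f a i \<and> f b i \<le> b i"
proof -
  have h1: "\<forall>x. x \<in> cube d \<longrightarrow> f x \<in> cube d" using fC by auto
  have h2: "\<forall>x. x \<in> cube d \<longrightarrow> (\<forall>i. i < d \<longrightarrow> 0 \<le> x i \<and> x i \<le> 1)"
    by (auto simp: cube_def)
  obtain l where l: "\<forall>x i. l x i \<le> (1::nat)"
      "\<forall>x i. x \<in> cube d \<and> i < d \<and> x i = 0 \<longrightarrow> l x i = 0"
      "\<forall>x i. x \<in> cube d \<and> i < d \<and> x i = 1 \<longrightarrow> l x i = 1"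
      "\<forall>x i. x \<in> cube d \<and> i < d \<and> l x i = 0 \<longrightarrow> x i \<le> f x i"
      "\<forall>x i. x \<in> cube d \<and> i < d \<and> l x i = 1 \<longrightarrow> f x i \<le> x i"
    using kuhn_labelling_lemma'[where P="\<lambda>x. x \<in> cube d" and Q="\<lambda>i. i < d", OF h1 h2] by blast
  define pt where "pt = (\<lambda>y::nat\<Rightarrow>nat. \<lambda>j. if j < d then real (y j) / real p else 0)"
  have ptC: "pt y \<in> cube d" if "\<forall>i<d. y i \<le> p" for y
    using that p by (auto simp: cube_def pt_def)
  obtain q where q1: "\<forall>i<d. q i < p"
    and q2: "\<forall>i<d. \<exists>r s. (\<forall>j<d. q j \<le> r j \<and> r j \<le> q j + 1) \<and> (\<forall>j<d. q j \<le> s j \<and> s j \<le> q j + 1)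
             \<and> l (pt r) i \<noteq> l (pt s) i"
  proof (rule kuhn_lemma[of p d "\<lambda>y i. l (pt y) i"])
    show "0 < p" by fact
    show "\<forall>x. (\<forall>i<d. x i \<le> p) \<longrightarrow> (\<forall>i<d. l (pt x) i = 0 \<or> l (pt x) i = 1)"
      using l(1) by (metis le_neq_implies_less less_one)
    show "\<forall>x. (\<forall>i<d. x i \<le> p) \<longrightarrow> (\<forall>i<d. x i = 0 \<longrightarrow> l (pt x) i = 0)"
      using l(2) ptC by (auto simp: pt_def)
    show "\<forall>x. (\<forall>i<d. x i \<le> p) \<longrightarrow> (\<forall>i<d. x i = p \<longrightarrow> l (pt x) i = 1)"
      using l(3) ptC p by (auto simp: pt_def)
  qed blast
  have qC: "pt q \<in> cube d" using q1 ptC by (simp add: less_imp_le)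
  have near: "\<bar>pt r j - pt q j\<bar> \<le> 1 / real p" if "\<forall>j<d. q j \<le> r j \<and> r j \<le> q j + 1" "j < d" for r j
  proof -
    have "real (q j) \<le> real (r j)" "real (r j) \<le> real (q j) + 1" using that by auto
    then have "\<bar>real (r j) - real (q j)\<bar> \<le> 1" by linarith
    then have "\<bar>real (r j) - real (q j)\<bar> / real p \<le> 1 / real p"
      using p by (simp add: divide_right_mono)
    moreover have "pt r j - pt q j = (real (r j) - real (q j)) / real p"
      using that(2) by (simp add: pt_def diff_divide_distrib)
    ultimately show ?thesis using p by (simp add: abs_divide)
  qed
  have rC: "pt r \<in> cube d" if "\<forall>j<d. q j \<le> r j \<and> r j \<le> q j + 1" for r
  proof -
    have "\<forall>i<d. r i \<le> p"
    proof (intro allI impI)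
      fix i assume "i < d"
      then have "q i < p" "r i \<le> q i + 1" using that q1 by auto
      then show "r i \<le> p" by linarith
    qed
    then show ?thesis by (rule ptC)
  qed
  have key: "\<forall>i<d. \<exists>a\<in>cube d. \<exists>b\<in>cube d. (\<forall>j<d. \<bar>a j - pt q j\<bar> \<le> 1 / real p) \<and>
            (\<forall>j<d. \<bar>b j - pt q j\<bar> \<le> 1 / real p) \<and> a i \<le> f a i \<and> f b i \<le> b i"
  proof (intro allI impI)
    fix i assume i: "i < d"
    obtain r s where rs: "\<forall>j<d. q j \<le> r j \<and> r j \<le> q j + 1" "\<forall>j<d. q j \<le> s j \<and> s j \<le> q j + 1"
      "l (pt r) i \<noteq> l (pt s) i" using q2 i by blast
    have lv: "l (pt r) i = 0 \<or> l (pt r) i = 1" "l (pt s) i = 0 \<or> l (pt s) i = 1"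
      using l(1) by (metis le_neq_implies_less less_one)+
    show "\<exists>a\<in>cube d. \<exists>b\<in>cube d. (\<forall>j<d. \<bar>a j - pt q j\<bar> \<le> 1 / real p) \<and>
            (\<forall>j<d. \<bar>b j - pt q j\<bar> \<le> 1 / real p) \<and> a i \<le> f a i \<and> f b i \<le> b i"
    proof (cases "l (pt r) i = 0")
      case True
      then have "l (pt s) i = 1" using lv rs(3) by auto
      then show ?thesis using True l(4,5) rC[OF rs(1)] rC[OF rs(2)] near[OF rs(1)] near[OF rs(2)] i
        by blast
    next
      case False
      then have "l (pt r) i = 1" "l (pt s) i = 0" using lv rs(3) by auto
      then show ?thesis using l(4,5) rC[OF rs(1)] rC[OF rs(2)] near[OF rs(1)] near[OF rs(2)] i
        by blast
    qed
  qed
  show ?thesis using key qC by blast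
qed

lemma brouwer_cube_fun:
  fixes f :: "(nat \<Rightarrow> real) \<Rightarrow> (nat \<Rightarrow> real)"
  assumes cont: "continuous_on (cube d) f" and fC: "\<forall>x\<in>cube d. f x \<in> cube d"
  shows "\<exists>x\<in>cube d. f x = x"
proof -
  have "\<forall>m. \<exists>z. z \<in> cube d \<and> (\<forall>i<d. \<exists>a\<in>cube d. \<exists>b\<in>cube d.
     (\<forall>j<d. \<bar>a j - z j\<bar> \<le> 1 / real (Suc m)) \<and> (\<forall>j<d. \<bar>b j - z j\<bar> \<le> 1 / real (Suc m)) \<and>
     a i \<le> f a i \<and> f b i \<le> b i)"
    using approx_fix[OF fC, of "Suc _"] by blast
  from this[unfolded choice_iff] obtain z where z: "\<And>m. z m \<in> cube d"
    "\<And>m i. i < d \<Longrightarrow> \<exists>a\<in>cube d. \<exists>b\<in>cube d.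
     (\<forall>j<d. \<bar>a j - z m j\<bar> \<le> 1 / real (Suc m)) \<and> (\<forall>j<d. \<bar>b j - z m j\<bar> \<le> 1 / real (Suc m)) \<and>
     a i \<le> f a i \<and> f b i \<le> b i" by blast
  define A where "A m i = (SOME a. a \<in> cube d \<and> (\<forall>j<d. \<bar>a j - z m j\<bar> \<le> 1 / real (Suc m)) \<and> a i \<le> f a i)" for m i
  define B where "B m i = (SOME a. a \<in> cube d \<and> (\<forall>j<d. \<bar>a j - z m j\<bar> \<le> 1 / real (Suc m)) \<and> f a i \<le> a i)" for m i
  have A: "A m i \<in> cube d \<and> (\<forall>j<d. \<bar>A m i j - z m j\<bar> \<le> 1 / real (Suc m)) \<and> A m i i \<le> f (A m i) i"
    if "i < d" for m i
  proof -
    have "\<exists>a. a \<in> cube d \<and> (\<forall>j<d. \<bar>a j - z m j\<bar> \<le> 1 / real (Suc m)) \<and> a i \<le> f a i"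
      using z(2)[OF that, of m] by blast
    then show ?thesis unfolding A_def by (rule someI_ex)
  qed
  have B: "B m i \<in> cube d \<and> (\<forall>j<d. \<bar>B m i j - z m j\<bar> \<le> 1 / real (Suc m)) \<and> f (B m i) i \<le> B m i i"
    if "i < d" for m i
  proof -
    have "\<exists>a. a \<in> cube d \<and> (\<forall>j<d. \<bar>a j - z m j\<bar> \<le> 1 / real (Suc m)) \<and> f a i \<le> a i"
      using z(2)[OF that, of m] by blast
    then show ?thesis unfolding B_def by (rule someI_ex)
  qed
  have sc: "seq_compact (cube d)" by (rule compact_imp_seq_compact[OF compact_cube])
  have "\<exists>l\<in>cube d. \<exists>r::nat\<Rightarrow>nat. strict_mono r \<and> (z \<circ> r) \<longlonglongrightarrow> l"
    using sc z(1) unfolding seq_compact_def by blast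
  then obtain l r where l: "l \<in> cube d" and r: "strict_mono r" and lim: "(z \<circ> r) \<longlonglongrightarrow> l"
    by blast
  have zero: "(\<lambda>m. 1 / real (Suc (r m))) \<longlonglongrightarrow> 0"
  proof -
    have "(\<lambda>n. 1 / real (Suc n)) \<longlonglongrightarrow> 0"
      using LIMSEQ_Suc[OF lim_1_over_n] by simp
    from LIMSEQ_subseq_LIMSEQ[OF this r] show ?thesis by (simp add: o_def)
  qed
  have close: "(\<lambda>m. W (r m)) \<longlonglongrightarrow> l"
    if W: "\<And>m. W m \<in> cube d" "\<And>m j. j < d \<Longrightarrow> \<bar>W m j - z m j\<bar> \<le> 1 / real (Suc m)" for W
    unfolding tendsto_fun_iff
  proof
    fix j
    show "(\<lambda>m. W (r m) j) \<longlonglongrightarrow> l j"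
    proof (cases "j < d")
      case False
      then have "W (r m) j = 0" "l j = 0" for m using W(1)[of "r m"] l by (auto simp: cube_out)
      then show ?thesis by simp
    next
      case True
      have zl: "(\<lambda>m. z (r m) j) \<longlonglongrightarrow> l j"
        using lim unfolding tendsto_fun_iff by (simp add: o_def)
      have "(\<lambda>m. W (r m) j - z (r m) j) \<longlonglongrightarrow> 0"
        by (rule Lim_null_comparison[OF _ zero]) (use W(2)[OF True] in auto)
      from tendsto_add[OF zl this] show ?thesis by simp
    qed
  qed
  have fix_i: "f l i = l i" if i: "i < d" for i
  proof -
    have cs: "((\<lambda>m. f (W (r m))) \<longlonglongrightarrow> f l)" if "(\<lambda>m. W (r m)) \<longlonglongrightarrow> l" "\<And>m. W m \<in> cube d" for W
    proof -
      have H: "\<forall>x. \<forall>a\<in>cube d. (\<forall>n. x n \<in> cube d) \<and> x \<longlonglongrightarrow> a \<longrightarrow> (f \<circ> x) \<longlonglongrightarrow> f a"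
        using cont unfolding continuous_on_sequentially .
      have "(\<forall>n. (\<lambda>m. W (r m)) n \<in> cube d) \<and> (\<lambda>m. W (r m)) \<longlonglongrightarrow> l" using that by simp
      then have "(f \<circ> (\<lambda>m. W (r m))) \<longlonglongrightarrow> f l"
        using mp[OF bspec[OF spec[OF H, of "\<lambda>m. W (r m)"] l]] by blast
      then show ?thesis by (simp add: o_def)
    qed
    have LA: "(\<lambda>m. A (r m) i) \<longlonglongrightarrow> l" by (rule close) (use A[OF i] in auto)
    have LB: "(\<lambda>m. B (r m) i) \<longlonglongrightarrow> l" by (rule close) (use B[OF i] in auto)
    have fA: "(\<lambda>m. f (A (r m) i)) \<longlonglongrightarrow> f l" by (rule cs[OF LA]) (use A[OF i] in auto)
    have fB: "(\<lambda>m. f (B (r m) i)) \<longlonglongrightarrow> f l" by (rule cs[OF LB]) (use B[OF i] in auto)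
    have fAi: "(\<lambda>m. f (A (r m) i) i) \<longlonglongrightarrow> f l i" using fA unfolding tendsto_fun_iff by blast
    have LAi: "(\<lambda>m. A (r m) i i) \<longlonglongrightarrow> l i" using LA unfolding tendsto_fun_iff by blast
    have fBi: "(\<lambda>m. f (B (r m) i) i) \<longlonglongrightarrow> f l i" using fB unfolding tendsto_fun_iff by blast
    have LBi: "(\<lambda>m. B (r m) i i) \<longlonglongrightarrow> l i" using LB unfolding tendsto_fun_iff by blast
    have evA: "eventually (\<lambda>m. A (r m) i i \<le> f (A (r m) i) i) sequentially"
      using A[OF i] by simp
    have evB: "eventually (\<lambda>m. f (B (r m) i) i \<le> B (r m) i i) sequentially"
      using B[OF i] by simp
    have 1: "l i \<le> f l i"
      by (rule tendsto_le[OF trivial_limit_sequentially fAi LAi evA])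
    have 2: "f l i \<le> l i"
      by (rule tendsto_le[OF trivial_limit_sequentially LBi fBi evB])
    from 1 2 show ?thesis by simp
  qed
  have "f l = l"
  proof
    fix i show "f l i = l i"
    proof (cases "i < d")
      case True then show ?thesis by (rule fix_i)
    next
      case False then show ?thesis using fC l by (auto simp: cube_out)
    qed
  qed
  with l show ?thesis by blast
qed


lemma finite_positions: "finite (positions n k)"
proof -
  have "positions n k \<subseteq> (\<lambda>s i. if i < n then s i else 0) ` PiE {..<n} (\<lambda>i. {..<k i})"
  proof
    fix s assume s: "s \<in> positions n k"
    show "s \<in> (\<lambda>s i. if i < n then s i else 0) ` PiE {..<n} (\<lambda>i. {..<k i})"
    proof (rule image_eqI)
      have s0: "\<forall>i. n \<le> i \<longrightarrow> s i = 0" and sk: "\<forall>i<n. s i < k i"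
        using s by (simp_all add: positions_def)
      show "s = (\<lambda>i. if i < n then restrict s {..<n} i else 0)"
      proof (rule ext)
        fix i show "s i = (if i < n then restrict s {..<n} i else 0)"
          using s0 by (cases "i < n") simp_all
      qed
      show "restrict s {..<n} \<in> PiE {..<n} (\<lambda>i. {..<k i})"
        using sk by (simp add: restrict_PiE_iff)
    qed
  qed
  moreover have "finite (PiE {..<n} (\<lambda>i. {..<k i}))" by (rule finite_PiE) auto
  ultimately show ?thesis using finite_subset by blast
qed

definition dlt :: "nat \<Rightarrow> nat \<Rightarrow> real" where "dlt a = (\<lambda>b. if b = a then 1 else 0)"

definition uval :: "nat \<Rightarrow> (nat \<Rightarrow> nat) \<Rightarrow> payoff \<Rightarrow> (nat \<Rightarrow> nat \<Rightarrow> real) \<Rightarrow> nat \<Rightarrow> nat \<Rightarrow> real" where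
  "uval n k P \<sigma> i a = EU n k P (\<sigma>(i := dlt a)) i"

lemma EU_upd:
  assumes i: "i < n"
  shows "EU n k P (\<sigma>(i := \<tau>)) i =
    (\<Sum>s\<in>positions n k. \<tau> (s i) * ((\<Prod>j\<in>{..<n}-{i}. \<sigma> j (s j)) * P s i))"
  unfolding EU_def
proof (rule sum.cong[OF refl])
  fix s
  have "(\<Prod>j<n. (\<sigma>(i := \<tau>)) j (s j)) = (\<sigma>(i := \<tau>)) i (s i) * (\<Prod>j\<in>{..<n}-{i}. (\<sigma>(i := \<tau>)) j (s j))"
    using i by (subst prod.remove[of _ i]) auto
  also have "(\<Prod>j\<in>{..<n}-{i}. (\<sigma>(i := \<tau>)) j (s j)) = (\<Prod>j\<in>{..<n}-{i}. \<sigma> j (s j))"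
    by (rule prod.cong) auto
  finally show "(\<Prod>j<n. (\<sigma>(i := \<tau>)) j (s j)) * P s i = \<tau> (s i) * ((\<Prod>j\<in>{..<n}-{i}. \<sigma> j (s j)) * P s i)"
    by simp
qed

lemma EU_lin:
  assumes i: "i < n" and tz: "\<forall>b. k i \<le> b \<longrightarrow> \<tau> b = 0"
  shows "EU n k P (\<sigma>(i := \<tau>)) i = (\<Sum>a<k i. \<tau> a * uval n k P \<sigma> i a)"
proof -
  define W where "W s = (\<Prod>j\<in>{..<n}-{i}. \<sigma> j (s j)) * P s i" for s
  have "(\<Sum>a<k i. \<tau> a * uval n k P \<sigma> i a) = (\<Sum>a<k i. \<tau> a * (\<Sum>s\<in>positions n k. dlt a (s i) * W s))"
    unfolding uval_def W_def using EU_upd[OF i] by simp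
  also have "\<dots> = (\<Sum>s\<in>positions n k. (\<Sum>a<k i. \<tau> a * dlt a (s i)) * W s)"
  proof -
    have "(\<Sum>a<k i. \<tau> a * (\<Sum>s\<in>positions n k. dlt a (s i) * W s))
        = (\<Sum>a<k i. \<Sum>s\<in>positions n k. \<tau> a * (dlt a (s i) * W s))"
      by (simp add: sum_distrib_left)
    also have "\<dots> = (\<Sum>s\<in>positions n k. \<Sum>a<k i. \<tau> a * (dlt a (s i) * W s))"
      by (rule sum.swap)
    also have "\<dots> = (\<Sum>s\<in>positions n k. (\<Sum>a<k i. \<tau> a * dlt a (s i)) * W s)"
      by (simp add: sum_distrib_right mult.assoc)
    finally show ?thesis .
  qed
  also have "\<dots> = (\<Sum>s\<in>positions n k. \<tau> (s i) * W s)"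
  proof (rule sum.cong[OF refl])
    fix s assume "s \<in> positions n k"
    then have si: "s i < k i" using i by (auto simp: positions_def)
    have "(\<Sum>a<k i. \<tau> a * dlt a (s i)) = (\<Sum>a<k i. if a = s i then \<tau> a else 0)"
      by (rule sum.cong) (auto simp: dlt_def)
    also have "\<dots> = \<tau> (s i)" using si by simp
    finally show "(\<Sum>a<k i. \<tau> a * dlt a (s i)) * W s = \<tau> (s i) * W s" by simp
  qed
  also have "\<dots> = EU n k P (\<sigma>(i := \<tau>)) i"
    unfolding W_def using EU_upd[OF i] by simp
  finally show ?thesis by simp
qed

definition gain where
  "gain n k P \<sigma> i a = max 0 (uval n k P \<sigma> i a - EU n k P \<sigma> i)"

definition nmap :: "nat \<Rightarrow> (nat \<Rightarrow> nat) \<Rightarrow> payoff \<Rightarrow> (nat \<Rightarrow> nat \<Rightarrow> real) \<Rightarrow> (nat \<Rightarrow> nat \<Rightarrow> real)" where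
  "nmap n k P \<sigma> = (\<lambda>i a. if i < n \<and> a < k i
      then (\<sigma> i a + gain n k P \<sigma> i a) / (1 + (\<Sum>b<k i. gain n k P \<sigma> i b)) else 0)"

lemma gain_nonneg: "0 \<le> gain n k P \<sigma> i a" by (simp add: gain_def)

lemma nmap_profile:
  assumes "profile n k \<sigma>"
  shows "profile n k (nmap n k P \<sigma>)"
proof -
  have "mixed k i (nmap n k P \<sigma> i)" if i: "i < n" for i
  proof -
    define G where "G = (\<Sum>b<k i. gain n k P \<sigma> i b)"
    have G: "0 \<le> G" unfolding G_def by (rule sum_nonneg) (simp add: gain_nonneg)
    have m: "mixed k i (\<sigma> i)" using assms i by (simp add: profile_def)
    have nn: "0 \<le> nmap n k P \<sigma> i a" for a
    proof (cases "a < k i")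
      case True
      have "0 \<le> \<sigma> i a" using m by (simp add: mixed_def)
      then have "0 \<le> \<sigma> i a + gain n k P \<sigma> i a" using gain_nonneg[of n k P \<sigma> i a] by linarith
      moreover have "0 < 1 + G" using G by linarith
      ultimately have "0 \<le> (\<sigma> i a + gain n k P \<sigma> i a) / (1 + G)" by simp
      then show ?thesis using True i unfolding nmap_def G_def by simp
    next
      case False then show ?thesis unfolding nmap_def by simp
    qed
    have sm: "(\<Sum>a<k i. nmap n k P \<sigma> i a) = 1"
    proof -
      have "(\<Sum>a<k i. nmap n k P \<sigma> i a) = (\<Sum>a<k i. (\<sigma> i a + gain n k P \<sigma> i a) / (1 + G))"
        by (rule sum.cong) (simp_all add: nmap_def i G_def)
      also have "\<dots> = (\<Sum>a<k i. \<sigma> i a + gain n k P \<sigma> i a) / (1 + G)"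
        by (rule sum_divide_distrib[symmetric])
      also have "(\<Sum>a<k i. \<sigma> i a + gain n k P \<sigma> i a) = (\<Sum>a<k i. \<sigma> i a) + G"
        unfolding G_def by (rule sum.distrib)
      also have "(\<Sum>a<k i. \<sigma> i a) = 1" using m by (simp add: mixed_def)
      finally show ?thesis using G by simp
    qed
    have zz: "\<forall>a. k i \<le> a \<longrightarrow> nmap n k P \<sigma> i a = 0" by (simp add: nmap_def)
    show ?thesis unfolding mixed_def using nn sm zz by blast
  qed
  moreover have "\<forall>i. n \<le> i \<longrightarrow> nmap n k P \<sigma> i = (\<lambda>_. 0)"
    by (simp add: nmap_def)
  ultimately show ?thesis unfolding profile_def by blast
qed

lemma nmap_fix_nash:
  assumes prof: "profile n k \<sigma>" and fx: "nmap n k P \<sigma> = \<sigma>"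
  shows "nash n k P \<sigma>"
  unfolding nash_def
proof (intro conjI prof allI impI)
  fix i \<tau> assume i: "i < n" and tau: "mixed k i \<tau>"
  have m: "mixed k i (\<sigma> i)" using prof i by (simp add: profile_def)
  let ?u = "uval n k P \<sigma> i" and ?E = "EU n k P \<sigma> i"
  have Elin: "?E = (\<Sum>a<k i. \<sigma> i a * ?u a)"
    using EU_lin[OF i, where \<tau>="\<sigma> i" and \<sigma>=\<sigma> and P=P and k=k] m by (simp add: mixed_def)
  have "\<exists>a<k i. 0 < \<sigma> i a \<and> ?u a \<le> ?E"
  proof (rule ccontr)
    assume no: "\<not> ?thesis"
    have "\<exists>a<k i. 0 < \<sigma> i a"
    proof (rule ccontr)
      assume "\<not> ?thesis"
      then have "\<forall>a<k i. \<sigma> i a = 0" using m by (auto simp: mixed_def not_less order_antisym)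
      then have "(\<Sum>a<k i. \<sigma> i a) = 0" by simp
      then show False using m by (simp add: mixed_def)
    qed
    then obtain a0 where a0: "a0 < k i" "0 < \<sigma> i a0" by blast
    have "0 < (\<Sum>a<k i. \<sigma> i a * (?u a - ?E))"
    proof (rule sum_pos2[of "{..<k i}" a0])
      show "0 < \<sigma> i a0 * (?u a0 - ?E)" using no a0 by (auto simp: not_le)
      fix a assume "a \<in> {..<k i}"
      then have ak: "a < k i" by simp
      have s0: "0 \<le> \<sigma> i a" using m by (simp add: mixed_def)
      show "0 \<le> \<sigma> i a * (?u a - ?E)"
      proof (cases "\<sigma> i a = 0")
        case True then show ?thesis by simp
      next
        case False
        then have "0 < \<sigma> i a" using s0 by simp
        then have "?E < ?u a" using no ak by (simp add: not_le)
        then show ?thesis using s0 by simp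
      qed
    qed (use a0 in auto)
    also have "(\<Sum>a<k i. \<sigma> i a * (?u a - ?E)) = (\<Sum>a<k i. \<sigma> i a * ?u a) - (\<Sum>a<k i. \<sigma> i a) * ?E"
      by (simp add: right_diff_distrib sum_subtractf sum_distrib_right)
    also have "\<dots> = 0" using Elin m by (simp add: mixed_def)
    finally show False by simp
  qed
  then obtain a where a: "a < k i" "0 < \<sigma> i a" "?u a \<le> ?E" by blast
  define G where "G = (\<Sum>b<k i. gain n k P \<sigma> i b)"
  have G: "0 \<le> G" unfolding G_def by (rule sum_nonneg) (simp add: gain_nonneg)
  have ga: "gain n k P \<sigma> i a = 0" using a by (simp add: gain_def)
  have "\<sigma> i a = \<sigma> i a / (1 + G)"
    using fun_cong[OF fun_cong[OF fx, of i], of a] i a ga by (simp add: nmap_def G_def)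
  then have "\<sigma> i a * (1 + G) = \<sigma> i a" using G by (simp add: field_simps)
  then have "G = 0" using a(2) by (simp add: algebra_simps)
  then have "\<forall>b\<in>{..<k i}. gain n k P \<sigma> i b = 0"
    unfolding G_def using sum_nonneg_eq_0_iff[of "{..<k i}" "gain n k P \<sigma> i"] gain_nonneg by blast
  then have ub: "?u b \<le> ?E" if "b < k i" for b
  proof -
    have "max 0 (?u b - ?E) = 0" using that \<open>\<forall>b\<in>{..<k i}. gain n k P \<sigma> i b = 0\<close>
      by (simp add: gain_def)
    then show ?thesis by (simp add: max_def split: if_splits)
  qed
  have "EU n k P (\<sigma>(i := \<tau>)) i = (\<Sum>a<k i. \<tau> a * ?u a)"
    using EU_lin[OF i, where \<tau>=\<tau> and \<sigma>=\<sigma> and P=P and k=k] tau by (simp add: mixed_def)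
  also have "\<dots> \<le> (\<Sum>a<k i. \<tau> a * ?E)"
  proof (rule sum_mono)
    fix b assume "b \<in> {..<k i}"
    then have "?u b \<le> ?E" "0 \<le> \<tau> b" using ub tau by (auto simp: mixed_def)
    then show "\<tau> b * ?u b \<le> \<tau> b * ?E" by (rule mult_left_mono)
  qed
  also have "\<dots> = ?E" using tau by (simp add: mixed_def sum_distrib_right[symmetric])
  finally show "EU n k P (\<sigma>(i := \<tau>)) i \<le> ?E" .
qed


lemma cube_nonneg: "x \<in> cube d \<Longrightarrow> 0 \<le> x j"
  using cube_in[of x d j] cube_out[of x d j] by (cases "j < d") auto

lemma cont_coord: "continuous_on S (\<lambda>x::nat\<Rightarrow>real. x j)"
  by (rule continuous_on_subset[OF continuous_on_product_coordinates]) simp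

lemma cont_EU:
  assumes "\<And>j c. continuous_on S (\<lambda>x. \<sigma> x j c)"
  shows "continuous_on S (\<lambda>x. EU n k P (\<sigma> x) i)"
  unfolding EU_def by (intro continuous_intros assms)

lemma cont_uval:
  assumes "\<And>j c. continuous_on S (\<lambda>x. \<sigma> x j c)"
  shows "continuous_on S (\<lambda>x. uval n k P (\<sigma> x) i a)"
  unfolding uval_def
proof (rule cont_EU)
  fix j c show "continuous_on S (\<lambda>x. ((\<sigma> x)(i := dlt a)) j c)"
    using assms[of j c] by (cases "j = i") simp_all
qed

lemma cont_nmap:
  assumes "\<And>j c. continuous_on S (\<lambda>x. \<sigma> x j c)"
  shows "continuous_on S (\<lambda>x. nmap n k P (\<sigma> x) i a)"
proof (cases "i < n \<and> a < k i")
  case True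
  have g: "continuous_on S (\<lambda>x. gain n k P (\<sigma> x) b)" for b
    unfolding gain_def by (intro continuous_intros cont_uval cont_EU assms)
  have pos: "1 + (\<Sum>b<k i. gain n k P (\<sigma> x) i b) \<noteq> 0" for x
  proof -
    have "0 \<le> (\<Sum>b<k i. gain n k P (\<sigma> x) i b)" by (rule sum_nonneg) (simp add: gain_nonneg)
    then show ?thesis by linarith
  qed
  have "continuous_on S (\<lambda>x. (\<sigma> x i a + gain n k P (\<sigma> x) i a) / (1 + (\<Sum>b<k i. gain n k P (\<sigma> x) i b)))"
    unfolding gain_def
    by (intro continuous_intros cont_uval cont_EU assms) (use pos in \<open>simp add: gain_def\<close>)
  then show ?thesis using True by (simp add: nmap_def)
next
  case False
  then have "(\<lambda>x. nmap n k P (\<sigma> x) i a) = (\<lambda>x. 0)" unfolding nmap_def by (simp only: if_not_P[OF False] if_False)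
  then show ?thesis by (metis continuous_on_const)
qed

definition Eset :: "nat \<Rightarrow> (nat \<Rightarrow> nat) \<Rightarrow> nat set" where
  "Eset n k = prod_encode ` (SIGMA i:{..<n}. {..<k i})"

lemma finite_Eset: "finite (Eset n k)"
  unfolding Eset_def by (intro finite_imageI finite_SigmaI) auto

definition Ssum :: "(nat \<Rightarrow> nat) \<Rightarrow> (nat \<Rightarrow> real) \<Rightarrow> nat \<Rightarrow> real" where "Ssum k x i = (\<Sum>b\<in>{1..<k i}. x (prod_encode (i, b)))"

definition ret :: "nat \<Rightarrow> (nat \<Rightarrow> nat) \<Rightarrow> (nat \<Rightarrow> real) \<Rightarrow> nat \<Rightarrow> nat \<Rightarrow> real" where
  "ret n k x = (\<lambda>i a. if i < n \<and> a < k i then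
      (if a = 0 then 1 - Ssum k x i / max 1 (Ssum k x i) else x (prod_encode (i, a)) / max 1 (Ssum k x i))
     else 0)"

definition emb :: "nat \<Rightarrow> (nat \<Rightarrow> nat) \<Rightarrow> (nat \<Rightarrow> nat \<Rightarrow> real) \<Rightarrow> nat \<Rightarrow> real" where
  "emb n k \<sigma> = (\<lambda>j. if j \<in> Eset n k then \<sigma> (fst (prod_decode j)) (snd (prod_decode j)) else 0)"

lemma cont_ret: "continuous_on S (\<lambda>x. ret n k x i a)"
proof -
  have c1: "continuous_on S (\<lambda>x. Ssum k x i)" unfolding Ssum_def by (intro continuous_intros cont_coord)
  have nz: "max 1 (Ssum k x i) \<noteq> 0" for x using max.cobounded1[of 1 "Ssum k x i"] by linarith
  have nz': "\<forall>x\<in>S. max 1 (Ssum k x i) \<noteq> 0" using nz by blast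
  show ?thesis
  proof (cases "i < n \<and> a < k i")
    case True
    then have eq: "(\<lambda>x. ret n k x i a) = (\<lambda>x. if a = 0 then 1 - Ssum k x i / max 1 (Ssum k x i)
       else x (prod_encode (i, a)) / max 1 (Ssum k x i))" unfolding ret_def by simp
    show ?thesis
      unfolding eq by (cases "a = 0") (simp_all, (intro continuous_intros c1 cont_coord nz')+)
  next
    case False
    then have "(\<lambda>x. ret n k x i a) = (\<lambda>x. 0)" unfolding ret_def by (simp only: if_not_P[OF False] if_False)
    then show ?thesis by (metis continuous_on_const)
  qed
qed

lemma sum_split0:
  fixes g :: "nat \<Rightarrow> real"
  assumes "1 \<le> m" shows "(\<Sum>a<m. g a) = g 0 + (\<Sum>a\<in>{1..<m}. g a)"
proof -
  have "(\<Sum>a<m. g a) = (\<Sum>a\<in>{0..<m}. g a)" by (simp add: atLeast0LessThan)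
  also have "\<dots> = g 0 + (\<Sum>a\<in>{Suc 0..<m}. g a)" using assms by (subst sum.atLeast_Suc_lessThan) auto
  finally show ?thesis by simp
qed

lemma ret_profile:
  assumes x: "x \<in> cube d" and k: "\<forall>i<n. 1 \<le> k i"
  shows "profile n k (ret n k x)"
proof -
  have "mixed k i (ret n k x i)" if i: "i < n" for i
  proof -
    let ?S = "Ssum k x i" and ?c = "max 1 (Ssum k x i)"
    have S0: "0 \<le> ?S" unfolding Ssum_def by (rule sum_nonneg) (simp add: cube_nonneg[OF x])
    have c: "0 < ?c" "?S \<le> ?c" by auto
    have Sc: "?S / ?c \<le> 1" using c by simp
    have nn: "0 \<le> ret n k x i a" for a
      using Sc c cube_nonneg[OF x] by (simp add: ret_def)
    have "(\<Sum>a<k i. ret n k x i a) = ret n k x i 0 + (\<Sum>a\<in>{1..<k i}. ret n k x i a)"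
      using k i by (intro sum_split0) auto
    also have "(\<Sum>a\<in>{1..<k i}. ret n k x i a) = (\<Sum>a\<in>{1..<k i}. x (prod_encode (i, a)) / ?c)"
      by (rule sum.cong) (auto simp: ret_def i)
    also have "\<dots> = ?S / ?c" by (simp add: Ssum_def sum_divide_distrib)
    also have "ret n k x i 0 = 1 - ?S / ?c" using k i by (simp add: ret_def Suc_le_eq)
    finally have "(\<Sum>a<k i. ret n k x i a) = 1" by simp
    moreover have "\<forall>a. k i \<le> a \<longrightarrow> ret n k x i a = 0" unfolding ret_def by simp
    ultimately show ?thesis using nn by (simp add: mixed_def)
  qed
  then show ?thesis by (auto simp: profile_def ret_def)
qed

lemma mixed_le1: "mixed k i \<tau> \<Longrightarrow> \<tau> a \<le> 1"
proof -
  assume m: "mixed k i \<tau>"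
  show ?thesis
  proof (cases "a < k i")
    case True
    have "\<tau> a \<le> (\<Sum>b<k i. \<tau> b)" by (rule member_le_sum) (use m True in \<open>auto simp: mixed_def\<close>)
    then show ?thesis using m by (simp add: mixed_def)
  next
    case False then show ?thesis using m by (simp add: mixed_def)
  qed
qed

lemma emb_cube:
  assumes p: "profile n k \<sigma>" and d: "Eset n k \<subseteq> {..<d}"
  shows "emb n k \<sigma> \<in> cube d"
proof (rule cubeI)
  fix j
  show "0 \<le> emb n k \<sigma> j \<and> emb n k \<sigma> j \<le> 1"
  proof (cases "j \<in> Eset n k")
    case True
    then obtain i a where ia: "i < n" "a < k i" "j = prod_encode (i, a)" by (auto simp: Eset_def)
    then have m: "mixed k i (\<sigma> i)" using p by (simp add: profile_def)
    then show ?thesis using True ia mixed_le1[OF m, of a] by (simp add: emb_def mixed_def)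
  next
    case False then show ?thesis by (simp add: emb_def)
  qed
next
  fix j assume "\<not> j < d"
  then have "j \<notin> Eset n k" using d by auto
  then show "emb n k \<sigma> j = 0" by (simp add: emb_def)
qed

lemma ret_emb:
  assumes p: "profile n k \<sigma>"
  shows "ret n k (emb n k \<sigma>) = \<sigma>"
proof (intro ext)
  fix i a
  show "ret n k (emb n k \<sigma>) i a = \<sigma> i a"
  proof (cases "i < n \<and> a < k i")
    case False
    have r0: "ret n k (emb n k \<sigma>) i a = 0" unfolding ret_def by (simp only: if_not_P[OF False] if_False)
    have "\<sigma> i a = 0"
    proof (cases "i < n")
      case True
      then have "k i \<le> a" using False by simp
      moreover have "mixed k i (\<sigma> i)" using p True by (simp add: profile_def)
      ultimately show ?thesis by (simp add: mixed_def)
    next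
      case False
      then have "\<sigma> i = (\<lambda>_. 0)" using p by (simp add: profile_def)
      then show ?thesis by simp
    qed
    then show ?thesis using r0 by simp
  next
    case True
    then have i: "i < n" and a: "a < k i" by auto
    have m: "mixed k i (\<sigma> i)" using p i by (simp add: profile_def)
    have e: "emb n k \<sigma> (prod_encode (i, b)) = \<sigma> i b" if "b < k i" for b
      using i that by (auto simp: emb_def Eset_def)
    have S: "Ssum k (emb n k \<sigma>) i = (\<Sum>b\<in>{1..<k i}. \<sigma> i b)"
      unfolding Ssum_def by (rule sum.cong) (auto simp: e)
    have k1: "1 \<le> k i" using a by simp
    have "(\<Sum>b<k i. \<sigma> i b) = \<sigma> i 0 + (\<Sum>b\<in>{1..<k i}. \<sigma> i b)" by (rule sum_split0[OF k1])
    then have S1: "Ssum k (emb n k \<sigma>) i = 1 - \<sigma> i 0" using m S by (simp add: mixed_def)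
    have "0 \<le> \<sigma> i 0" using m by (simp add: mixed_def)
    then have c: "max 1 (Ssum k (emb n k \<sigma>) i) = 1" using S1 by simp
    show ?thesis
    proof (cases "a = 0")
      case True then show ?thesis using i a c S1 by (simp add: ret_def)
    next
      case False then show ?thesis using i a c e[OF a] by (simp add: ret_def)
    qed
  qed
qed

lemma nash_exists:
  assumes k: "\<forall>i<n. 1 \<le> k i"
  shows "\<exists>\<sigma>. nash n k P \<sigma>"
proof -
  obtain d where d: "Eset n k \<subseteq> {..<d}"
    using finite_Eset[of n k] finite_nat_iff_bounded by blast
  define F where "F x = emb n k (nmap n k P (ret n k x))" for x
  have cont: "continuous_on (cube d) F"
    unfolding F_def emb_def
  proof (intro continuous_on_coordinatewise_then_product)
    fix j
    show "continuous_on (cube d) (\<lambda>x. if j \<in> Eset n k then nmap n k P (ret n k x) (fst (prod_decode j)) (snd (prod_decode j)) else 0)"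
      by (cases "j \<in> Eset n k") (simp_all add: cont_nmap cont_ret)
  qed
  have FC: "\<forall>x\<in>cube d. F x \<in> cube d"
    unfolding F_def using emb_cube[OF nmap_profile[OF ret_profile[OF _ k]] d] by blast
  obtain x where x: "x \<in> cube d" "F x = x" using brouwer_cube_fun[OF cont FC] by blast
  define \<tau> where "\<tau> = nmap n k P (ret n k x)"
  have tp: "profile n k \<tau>" unfolding \<tau>_def by (rule nmap_profile[OF ret_profile[OF x(1) k]])
  have "x = emb n k \<tau>" using x(2) by (simp add: F_def \<tau>_def)
  then have "ret n k x = \<tau>" using ret_emb[OF tp] by simp
  then have "nmap n k P \<tau> = \<tau>" by (simp add: \<tau>_def)
  then show ?thesis using nmap_fix_nash[OF tp] by blast
qed


lemma chi_ne:
  assumes p: "profile n k \<sigma>"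
  shows "\<exists>u. u \<in> chi n k \<sigma>"
proof -
  have "\<forall>i. \<exists>a. i < n \<longrightarrow> a < k i \<and> \<sigma> i a \<noteq> 0"
  proof
    fix i show "\<exists>a. i < n \<longrightarrow> a < k i \<and> \<sigma> i a \<noteq> 0"
    proof (cases "i < n")
      case True
      then have m: "mixed k i (\<sigma> i)" using p by (simp add: profile_def)
      show ?thesis
      proof (rule ccontr)
        assume "\<not> ?thesis"
        then have "\<forall>a<k i. \<sigma> i a = 0" using True by blast
        then have "(\<Sum>a<k i. \<sigma> i a) = 0" by simp
        then show False using m by (simp add: mixed_def)
      qed
    qed simp
  qed
  then obtain A where A: "\<forall>i. i < n \<longrightarrow> A i < k i \<and> \<sigma> i (A i) \<noteq> 0" by metis
  define u where "u i = (if i < n then A i else 0)" for i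
  have "u \<in> chi n k \<sigma>" using A by (simp add: chi_def positions_def u_def)
  then show ?thesis by blast
qed

lemma NME_ne:
  assumes k: "\<forall>i<n. 1 \<le> k i"
  shows "\<exists>\<sigma>. \<sigma> \<in> NME n k g"
proof -
  have "\<forall>i. \<exists>\<tau>. nash n k (g (Suc i)) \<tau>" using nash_exists[OF k] by blast
  then obtain T where T: "\<And>i. nash n k (g (Suc i)) (T i)" by metis
  define \<sigma> where "\<sigma> i = (if i < n then T i i else (\<lambda>_. 0))" for i
  have "profile n k \<sigma>"
    using T unfolding profile_def \<sigma>_def nash_def by auto
  moreover have "\<forall>i<n. \<exists>\<tau>. nash n k (g (Suc i)) \<tau> \<and> \<sigma> i = \<tau> i"
    using T unfolding \<sigma>_def by auto
  ultimately show ?thesis unfolding NME_def by blast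
qed

definition Fset :: "nat \<Rightarrow> (nat \<Rightarrow> nat) \<Rightarrow> mgame \<Rightarrow> (nat \<Rightarrow> nat) set" where
  "Fset n k g = {v \<in> positions n k. \<forall>j p. 1 \<le> j \<and> j \<le> n \<and> p < n \<longrightarrow> g j v p = g 0 v p}"

definition cnt where "cnt n k g = card (Fset n k g)"

lemma cnt_le: "cnt n k g \<le> card (positions n k)"
  unfolding cnt_def Fset_def by (rule card_mono[OF finite_positions]) auto

lemma upd_same: "u \<in> Fset n k g \<Longrightarrow> upd n g u = g"
  unfolding upd_def Fset_def by (intro ext) auto

lemma Fset_upd:
  assumes u: "u \<in> positions n k"
  shows "insert u (Fset n k g) \<subseteq> Fset n k (upd n g u)"
  using u unfolding Fset_def upd_def by auto

lemma upd_grow: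
  assumes u: "u \<in> positions n k" and nu: "u \<notin> Fset n k g"
  shows "cnt n k g < cnt n k (upd n g u)"
proof -
  have fin: "finite (Fset n k (upd n g u))"
    unfolding Fset_def by (rule finite_subset[OF _ finite_positions]) auto
  have "card (insert u (Fset n k g)) \<le> card (Fset n k (upd n g u))"
    by (rule card_mono[OF fin Fset_upd[OF u]])
  moreover have "finite (Fset n k g)"
    unfolding Fset_def by (rule finite_subset[OF _ finite_positions]) auto
  ultimately show ?thesis using nu by (simp add: cnt_def)
qed

definition Rel :: "nat \<Rightarrow> (nat \<Rightarrow> nat) \<Rightarrow> (mgame \<times> mgame) set" where
  "Rel n k = {(g, h). h \<in> AD n k {g}}"

lemma AD_Image: "AD n k M = Rel n k `` M"
  unfolding Rel_def AD_def by auto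

lemma ADiter_relpow: "ADiter n k t M = (Rel n k ^^ t) `` M"
proof (induction t arbitrary: M)
  case 0 then show ?case by simp
next
  case (Suc t)
  have "ADiter n k (Suc t) M = (Rel n k ^^ t) `` (Rel n k `` M)"
    by (simp add: Suc AD_Image)
  also have "\<dots> = (Rel n k O Rel n k ^^ t) `` M" by (simp add: relcomp_Image)
  also have "Rel n k O Rel n k ^^ t = Rel n k ^^ Suc t" by (simp add: relpow_commute)
  finally show ?case .
qed

lemma Rel_step:
  assumes "(g, h) \<in> Rel n k"
  shows "h = g \<or> cnt n k g < cnt n k h"
proof -
  obtain \<sigma> u where h: "h = upd n g u" and u: "u \<in> chi n k \<sigma>"
    using assms unfolding Rel_def AD_def by blast
  have up: "u \<in> positions n k" using u by (simp add: chi_def)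
  show ?thesis
  proof (cases "u \<in> Fset n k g")
    case True then show ?thesis using h upd_same by blast
  next
    case False then show ?thesis using h upd_grow[OF up False] by blast
  qed
qed

lemma Rel_full:
  assumes k: "\<forall>i<n. 1 \<le> k i" and F: "Fset n k g = positions n k"
  shows "(g, g) \<in> Rel n k"
proof -
  obtain \<sigma> where s: "\<sigma> \<in> NME n k g" using NME_ne[OF k] by blast
  then have "profile n k \<sigma>" by (simp add: NME_def)
  then obtain u where u: "u \<in> chi n k \<sigma>" using chi_ne by blast
  then have "u \<in> Fset n k g" using F by (simp add: chi_def)
  then have ug: "upd n g u = g" by (rule upd_same)
  have "upd n g u \<in> AD n k {g}" unfolding AD_def using s u by blast
  then have "g \<in> AD n k {g}" by (simp only: ug)
  then show ?thesis by (simp add: Rel_def)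
qed

lemma walk_dup:
  assumes "(x, y) \<in> Rel n k ^^ t"
  shows "cnt n k x + t \<le> cnt n k y \<or> (x, y) \<in> Rel n k ^^ Suc t"
  using assms
proof (induction t arbitrary: y)
  case 0 then show ?case by simp
next
  case (Suc t)
  from Suc.prems obtain z where xz: "(x, z) \<in> Rel n k ^^ t" and zy: "(z, y) \<in> Rel n k" by auto
  show ?case
  proof (cases "y = z")
    case True
    have "(x, y) \<in> Rel n k ^^ Suc t" using Suc.prems .
    then have "(x, y) \<in> Rel n k ^^ Suc t O Rel n k" using zy True by blast
    then show ?thesis by simp
  next
    case False
    then have lt: "cnt n k z < cnt n k y" using Rel_step[OF zy] by blast
    from Suc.IH[OF xz] show ?thesis
    proof
      assume "cnt n k x + t \<le> cnt n k z" then show ?thesis using lt by simp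
    next
      assume "(x, z) \<in> Rel n k ^^ Suc t"
      then have "(x, y) \<in> Rel n k ^^ Suc t O Rel n k" using zy by blast
      then show ?thesis by simp
    qed
  qed
qed

lemma walk_rm:
  assumes "(x, y) \<in> Rel n k ^^ Suc t"
  shows "cnt n k x + Suc t \<le> cnt n k y \<or> (x, y) \<in> Rel n k ^^ t"
  using assms
proof (induction t arbitrary: y)
  case 0
  then have xy: "(x, y) \<in> Rel n k" by simp
  show ?case using Rel_step[OF xy] by auto
next
  case (Suc t)
  from Suc.prems obtain z where xz: "(x, z) \<in> Rel n k ^^ Suc t" and zy: "(z, y) \<in> Rel n k"
    by (metis relpow_Suc_E)
  show ?case
  proof (cases "y = z")
    case True then show ?thesis using xz by simp
  next
    case False
    then have lt: "cnt n k z < cnt n k y" using Rel_step[OF zy] by blast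
    from Suc.IH[OF xz] show ?thesis
    proof
      assume "cnt n k x + Suc t \<le> cnt n k z" then show ?thesis using lt by simp
    next
      assume "(x, z) \<in> Rel n k ^^ t"
      then have "(x, y) \<in> Rel n k ^^ t O Rel n k" using zy by blast
      then show ?thesis by simp
    qed
  qed
qed

theorem proposition12:
  fixes n :: nat and k :: "nat \<Rightarrow> nat" and mg :: mgame
  assumes "1 \<le> n" and "\<forall>i<n. 1 \<le> k i"
  shows "(\<exists>t. ADiter n k (Suc t) {mg} = ADiter n k t {mg})
         \<and> ad_length n k mg \<le> card (positions n k)"
proof -
  let ?N = "card (positions n k)"
  have eq: "ADiter n k (Suc ?N) {mg} = ADiter n k ?N {mg}"
    unfolding ADiter_relpow
  proof (intro equalityI subsetI)
    fix y assume "y \<in> (Rel n k ^^ Suc ?N) `` {mg}"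
    then have w: "(mg, y) \<in> Rel n k ^^ Suc ?N" by simp
    have "\<not> cnt n k mg + Suc ?N \<le> cnt n k y" using cnt_le[of n k y] by simp
    then have "(mg, y) \<in> Rel n k ^^ ?N" using walk_rm[OF w] by blast
    then show "y \<in> (Rel n k ^^ ?N) `` {mg}" by simp
  next
    fix y assume "y \<in> (Rel n k ^^ ?N) `` {mg}"
    then have w: "(mg, y) \<in> Rel n k ^^ ?N" by simp
    from walk_dup[OF w] have "(mg, y) \<in> Rel n k ^^ Suc ?N"
    proof
      assume "cnt n k mg + ?N \<le> cnt n k y"
      then have c: "card (Fset n k y) = ?N" using cnt_le[of n k y] by (simp add: cnt_def)
      have "Fset n k y = positions n k"
        by (rule card_subset_eq[OF finite_positions _ c]) (auto simp: Fset_def)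
      then have "(y, y) \<in> Rel n k" by (rule Rel_full[OF assms(2)])
      with w have "(mg, y) \<in> Rel n k ^^ ?N O Rel n k" by blast
      then show ?thesis by simp
    qed
    then show "y \<in> (Rel n k ^^ Suc ?N) `` {mg}" by simp
  qed
  then have "ad_length n k mg \<le> ?N"
    unfolding ad_length_def by (rule Least_le)
  with eq show ?thesis by blast
qed

end
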